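(* Suppose $\Delta(x,\varepsilon)$ is not independent of $x$. Let $r\ge1$ be the smallest index such that $\Delta_r$ is nonconstant, and put $$A(\varepsilon)=\sum_{n<r}\Delta_n\varepsilon^n,$$ a polynomial in $\varepsilon$ with constant coefficients, so that $\Delta(x,\varepsilon)=A(\varepsilon)+\Delta_r(x)\varepsilon^r+o(\varepsilon^r)$. Then, as $\varepsilon\to0$, for each $x$, $${}_qR\big(x,Y(x,\varepsilon),\varepsilon,A(\varepsilon)\big)=\frac{q(q+1)}{2}\,\Delta_r(x)\,\varepsilon^r+o(\varepsilon^r),$$ $${}_qS\big(x,Y(x,\varepsilon),\varepsilon,A(\varepsilon)\big)=q\,\Delta_r(x)\,\varepsilon^r+o(\varepsilon^r).$$
   Context: Fix integers $p$ and $q\ge1$ and put $\mu=2\pi p/q$. Let $f:\mathbb R\to\mathbb R$ be a $2\pi$-periodic real-analytic function. For real parameters $\varepsilon,\delta$ set $g(x)=-\delta-\varepsilon f(x)$ and consider the map $T_{\varepsilon,\delta}(x,y)=(x+y+\mu+g(x),\;y+g(x))$ on $\mathbb R^2$. Define ${}_nR$ and ${}_nS$ by $T^n_{\varepsilon,\delta}(x_0,y_0)=(x_0+n\mu+{}_nR,\;y_0+{}_nS)$. There exist $\bar{\bar\varepsilon},\eta>0$ and real-analytic functions $\Delta(x,\varepsilon)$ and $Y(x,\varepsilon)$, defined for $x\in\mathbb R$ and $|\varepsilon|<\bar{\bar\varepsilon}$ and vanishing at $\varepsilon=0$, such that $(\delta,y)=(\Delta(x,\varepsilon),Y(x,\varepsilon))$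 is the unique solution with $|\delta|,|y|<\eta$ of ${}_qR(x,y,\varepsilon,\delta)={}_qS(x,y,\varepsilon,\delta)=0$. Write $\Delta(x,\varepsilon)=\sum_{n\ge1}\Delta_n(x)\varepsilon^n$. *)

theory Defs
  imports "HOL-Analysis.Analysis" "HOL-Library.Landau_Symbols"
begin

definition real_analytic_on :: "(real \<Rightarrow> real) \<Rightarrow> real set \<Rightarrow> bool" where
  "real_analytic_on f S \<longleftrightarrow>
     (\<forall>a\<in>S. \<exists>\<rho>>0. \<exists>c::nat \<Rightarrow> real. \<forall>x. \<bar>x - a\<bar> < \<rho> \<longrightarrow>
        ((\<lambda>i. c i * (x - a) ^ i) has_sum f x) UNIV)"

definition real_analytic2_on :: "(real \<Rightarrow> real \<Rightarrow> real) \<Rightarrow> (real \<times> real) set \<Rightarrow> bool" where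
  "real_analytic2_on F U \<longleftrightarrow>
     (\<forall>(a, b)\<in>U. \<exists>\<rho>>0. \<exists>c::nat \<Rightarrow> nat \<Rightarrow> real. \<forall>x e. \<bar>x - a\<bar> < \<rho> \<and> \<bar>e - b\<bar> < \<rho> \<longrightarrow>
        ((\<lambda>(i, j). c i j * (x - a) ^ i * (e - b) ^ j) has_sum F x e) UNIV)"

definition Tmap :: "real \<Rightarrow> (real \<Rightarrow> real) \<Rightarrow> real \<Rightarrow> real \<Rightarrow> real \<times> real \<Rightarrow> real \<times> real" where
  "Tmap \<mu> f \<epsilon> \<delta> = (\<lambda>(x, y). let g = - \<delta> - \<epsilon> * f x in (x + y + \<mu> + g, y + g))"

definition nR :: "nat \<Rightarrow> real \<Rightarrow> (real \<Rightarrow> real) \<Rightarrow> real \<Rightarrow> real \<Rightarrow> real \<Rightarrow> real \<Rightarrow> real" where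
  "nR n \<mu> f x y \<epsilon> \<delta> = fst ((Tmap \<mu> f \<epsilon> \<delta> ^^ n) (x, y)) - x - real n * \<mu>"

definition nS :: "nat \<Rightarrow> real \<Rightarrow> (real \<Rightarrow> real) \<Rightarrow> real \<Rightarrow> real \<Rightarrow> real \<Rightarrow> real \<Rightarrow> real" where
  "nS n \<mu> f x y \<epsilon> \<delta> = snd ((Tmap \<mu> f \<epsilon> \<delta> ^^ n) (x, y)) - y"

end

theory Submission
  imports Defs
begin


lemma o_lemma:
  fixes h :: "real \<Rightarrow> real"
  assumes ev: "eventually (\<lambda>e. \<bar>h e\<bar> \<le> K * \<bar>e\<bar> ^ Suc r) (at 0)"
  shows "h \<in> o[at 0](\<lambda>e. e ^ r)"
proof (rule landau_o.smallI)
  fix c :: real assume c: "c > 0"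
  define K' where "K' = max K 1"
  have K': "K' > 0" "K \<le> K'" by (auto simp: K'_def)
  have "eventually (\<lambda>e. \<bar>e\<bar> < c / K') (at (0::real))"
    using c K' by (intro eventually_at_in_open' [of "{-c/K'<..<c/K'}" 0, THEN eventually_mono]) auto
  with ev show "eventually (\<lambda>e. norm (h e) \<le> c * norm (e ^ r)) (at 0)"
  proof eventually_elim
    case (elim e)
    have "\<bar>h e\<bar> \<le> K' * \<bar>e\<bar> ^ Suc r"
      using elim(1) K' by (meson mult_right_mono order_trans zero_le_power abs_ge_zero)
    also have "\<dots> = (K' * \<bar>e\<bar>) * \<bar>e\<bar> ^ r" by simp
    also have "\<dots> \<le> c * \<bar>e\<bar> ^ r"
      using elim(2) K' by (intro mult_right_mono) (auto simp: field_simps)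
    finally show ?case by (simp add: power_abs)
  qed
qed



lemma analytic_deriv:
  assumes an: "real_analytic_on f UNIV"
  shows "\<forall>x. (f has_field_derivative deriv f x) (at x)" "continuous_on UNIV (deriv f)"
proof -
  have loc: "\<exists>\<rho>>0. \<exists>D. (\<forall>z. \<bar>z - a\<bar> < \<rho> \<longrightarrow> (f has_field_derivative D z) (at z)) \<and> isCont D a"
    for a
  proof -
    obtain \<rho> c where rho: "\<rho> > 0" and hs: "\<And>x. \<bar>x - a\<bar> < \<rho> \<Longrightarrow> ((\<lambda>i. c i * (x - a) ^ i) has_sum f x) UNIV"
      using an unfolding real_analytic_on_def by blast
    have sm: "(\<lambda>i. c i * w ^ i) sums f (w + a)" if "norm w < \<rho>" for w :: real
      using hs[of "w + a"] that by (auto intro: has_sum_imp_sums)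
    define D where "D = (\<lambda>z. \<Sum>n. diffs c n * (z - a) ^ n)"
    have "(f has_field_derivative D z) (at z)" if z: "\<bar>z - a\<bar> < \<rho>" for z
    proof -
      have d: "((\<lambda>w. \<Sum>n. c n * w^n) has_field_derivative (\<Sum>n. diffs c n * (z-a)^n)) (at (z - a))"
        by (rule termdiffs_strong'[where K = \<rho>]) (use sm z in \<open>auto intro: sums_summable\<close>)
      have h1: "((\<lambda>x. x - a) has_real_derivative 1) (at z)"
        by (rule derivative_eq_intros refl | simp)+
      have "((\<lambda>x. (\<Sum>n. c n * (x - a)^n)) has_field_derivative (\<Sum>n. diffs c n * (z-a)^n)) (at z)"
        using DERIV_chain2[of "\<lambda>w. \<Sum>n. c n * w^n" _ "\<lambda>x. x - a" z, OF d, of 1 UNIV] h1 by simp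
      then show ?thesis
        unfolding D_def
        by (rule has_field_derivative_transform_within_open[where S = "{a - \<rho><..<a + \<rho>}"])
           (use z sm in \<open>auto simp: sums_iff abs_less_iff\<close>)
    qed
    moreover have "isCont D a"
    proof -
      have s: "summable (\<lambda>n. diffs c n * (\<rho>/2) ^ n)"
        by (rule termdiff_converges[where K = \<rho>]) (use sm rho in \<open>auto intro: sums_summable\<close>)
      have "isCont (\<lambda>w. \<Sum>n. diffs c n * w ^ n) (a - a)"
        by (rule isCont_powser[OF s]) (use rho in auto)
      moreover have "isCont (\<lambda>z. z - a) a" by (intro continuous_intros)
      ultimately show ?thesis unfolding D_def
        using Topological_Spaces.isCont_o2[where f="\<lambda>z. z - a" and a=a and g="\<lambda>w. \<Sum>n. diffs c n * w ^ n"] by simp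
    qed
    ultimately show ?thesis using rho by blast
  qed
  show dv: "\<forall>x. (f has_field_derivative deriv f x) (at x)"
  proof
    fix x
    obtain \<rho> D where "\<rho> > 0" "\<forall>z. \<bar>z - x\<bar> < \<rho> \<longrightarrow> (f has_field_derivative D z) (at z)"
      using loc[of x] by blast
    then have d: "(f has_field_derivative D x) (at x)" by auto
    then have "deriv f x = D x" by (rule DERIV_imp_deriv)
    with d show "(f has_field_derivative deriv f x) (at x)" by simp
  qed
  have "isCont (deriv f) a" for a
  proof -
    obtain \<rho> D where rho: "\<rho> > 0" and dd: "\<forall>z. \<bar>z - a\<bar> < \<rho> \<longrightarrow> (f has_field_derivative D z) (at z)"
      and c: "isCont D a"
      using loc[of a] by blast
    have "eventually (\<lambda>z. z \<in> {a - \<rho><..<a + \<rho>}) (nhds a)"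
      using rho by (intro eventually_nhds_in_open) auto
    then have "eventually (\<lambda>z. deriv f z = D z) (nhds a)"
    proof eventually_elim
      case (elim z)
      then have "\<bar>z - a\<bar> < \<rho>" by (simp add: abs_less_iff)
      with dd have "(f has_field_derivative D z) (at z)" by blast
      then show ?case by (rule DERIV_imp_deriv)
    qed
    then show ?thesis using c isCont_cong by blast
  qed
  then show "continuous_on UNIV (deriv f)"
    by (simp add: continuous_at_imp_continuous_on)
qed



lemma periodic_lipschitz:
  fixes f f' :: "real \<Rightarrow> real"
  assumes per: "\<forall>x. f (x + 2 * pi) = f x"
    and d: "\<forall>x. (f has_field_derivative f' x) (at x)"
    and c: "continuous_on UNIV f'"
  shows "\<exists>L\<ge>0. \<forall>u v. \<bar>f u - f v\<bar> \<le> L * \<bar>u - v\<bar>"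
proof -
  have per': "f' (x + 2 * pi) = f' x" for x
  proof -
    have h1: "((\<lambda>t. t + 2 * pi) has_real_derivative 1) (at x)"
      by (rule derivative_eq_intros refl | simp)+
    have "((\<lambda>t. f (t + 2 * pi)) has_field_derivative f' (x + 2 * pi) * 1) (at x)"
      using DERIV_chain2[of f "f' (x + 2*pi)" "\<lambda>t. t + 2*pi" x 1 UNIV] d h1 by simp
    then have "(f has_field_derivative f' (x + 2 * pi)) (at x)"
      using per by simp
    with d show ?thesis using DERIV_unique by blast
  qed
  have shn: "f' (x + 2 * pi * real n) = f' x \<and> f' (x - 2 * pi * real n) = f' x" for x n
  proof (induction n arbitrary: x)
    case 0 then show ?case by simp
  next
    case (Suc n)
    have e1: "x + 2 * pi * real (Suc n) = (x + 2 * pi * real n) + 2 * pi" by (simp add: algebra_simps)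
    have e2: "x - 2 * pi * real n = (x - 2 * pi * real (Suc n)) + 2 * pi" by (simp add: field_simps)
    show ?case using Suc[of x] Suc[of "x - 2 * pi"] per'[of "x + 2 * pi * real n"]
        per'[of "x - 2 * pi * real (Suc n)"] e1 e2 by metis
  qed
  obtain M where M: "\<forall>x. 0 \<le> x \<and> x \<le> 2 * pi \<longrightarrow> \<bar>f' x\<bar> \<le> M"
    using isCont_bounded[of 0 "2*pi" "\<lambda>x. \<bar>f' x\<bar>"] c
    by (auto intro!: continuous_intros simp: continuous_on_eq_continuous_at)
  have bnd: "\<bar>f' x\<bar> \<le> M" for x
  proof -
    define k where "k = \<lfloor>x / (2 * pi)\<rfloor>"
    define s where "s = x - 2 * pi * of_int k"
    have "of_int k \<le> x / (2*pi)" "x / (2*pi) < of_int k + 1"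
      unfolding k_def by linarith+
    then have "2 * pi * of_int k \<le> x" "x < 2 * pi * of_int k + 2 * pi"
      using pi_gt_zero by (simp_all add: field_simps)
    then have s: "0 \<le> s" "s \<le> 2 * pi" unfolding s_def by linarith+
    have "f' x = f' s"
    proof (cases "k \<ge> 0")
      case True
      then have "x = s + 2 * pi * real (nat k)" unfolding s_def by simp
      then show ?thesis using shn by metis
    next
      case False
      then have "x = s - 2 * pi * real (nat (-k))" unfolding s_def by simp
      then show ?thesis using shn by metis
    qed
    then show ?thesis using M s by simp
  qed
  have M0: "M \<ge> 0" using bnd[of 0] by linarith
  have lip: "\<bar>f v - f u\<bar> \<le> M * \<bar>v - u\<bar>" if uv: "u < v" for u v
  proof -
    obtain z where "f v - f u = (v - u) * f' z"
      using MVT2[of u v f f'] uv d by blast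
    then have "\<bar>f v - f u\<bar> = (v - u) * \<bar>f' z\<bar>" using that by (simp add: abs_mult)
    also have "\<dots> \<le> (v - u) * M" using bnd[of z] that by (intro mult_left_mono) auto
    finally show ?thesis using uv by (simp add: mult.commute)
  qed
  have "\<bar>f u - f v\<bar> \<le> M * \<bar>u - v\<bar>" for u v
  proof (cases u v rule: linorder_cases)
    case less then show ?thesis using lip[of u v] by (simp add: abs_minus_commute)
  next
    case greater then show ?thesis using lip[of v u] by simp
  qed simp
  then show ?thesis using M0 by blast
qed



lemma Tmap_eq: "Tmap \<mu> f e d P = (fst P + snd P + \<mu> - d - e * f (fst P), snd P - d - e * f (fst P))"
  by (cases P) (simp add: Tmap_def Let_def)

lemma orbit_diff:
  fixes f :: "real \<Rightarrow> real"
  assumes L0: "L \<ge> 0" and Lf: "\<forall>u v. \<bar>f u - f v\<bar> \<le> L * \<bar>u - v\<bar>"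
  shows "\<exists>C\<ge>0. \<forall>e d1 d2 x y. \<bar>e\<bar> \<le> 1 \<longrightarrow>
      \<bar>fst ((Tmap \<mu> f e d1 ^^ k) (x,y)) - fst ((Tmap \<mu> f e d2 ^^ k) (x,y))\<bar> \<le> C * \<bar>d1 - d2\<bar> \<and>
      \<bar>snd ((Tmap \<mu> f e d1 ^^ k) (x,y)) - snd ((Tmap \<mu> f e d2 ^^ k) (x,y)) + real k * (d1 - d2)\<bar>
         \<le> C * \<bar>e\<bar> * \<bar>d1 - d2\<bar> \<and>
      \<bar>fst ((Tmap \<mu> f e d1 ^^ k) (x,y)) - fst ((Tmap \<mu> f e d2 ^^ k) (x,y))
         + real k * (real k + 1) / 2 * (d1 - d2)\<bar> \<le> C * \<bar>e\<bar> * \<bar>d1 - d2\<bar>"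
proof (induction k)
  case 0
  show ?case by (intro exI[of _ 0]) simp
next
  case (Suc k)
  then obtain C where C0: "C \<ge> 0" and IH: "\<And>e d1 d2 x y. \<bar>e\<bar> \<le> 1 \<Longrightarrow>
      \<bar>fst ((Tmap \<mu> f e d1 ^^ k) (x,y)) - fst ((Tmap \<mu> f e d2 ^^ k) (x,y))\<bar> \<le> C * \<bar>d1 - d2\<bar> \<and>
      \<bar>snd ((Tmap \<mu> f e d1 ^^ k) (x,y)) - snd ((Tmap \<mu> f e d2 ^^ k) (x,y)) + real k * (d1 - d2)\<bar>
         \<le> C * \<bar>e\<bar> * \<bar>d1 - d2\<bar> \<and>
      \<bar>fst ((Tmap \<mu> f e d1 ^^ k) (x,y)) - fst ((Tmap \<mu> f e d2 ^^ k) (x,y))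
         + real k * (real k + 1) / 2 * (d1 - d2)\<bar> \<le> C * \<bar>e\<bar> * \<bar>d1 - d2\<bar>"
    by blast
  define C' where "C' = 2 * C + L * C + real k + 1"
  have C'0: "C' \<ge> 0" unfolding C'_def using C0 L0 by simp
  show ?case
  proof (intro exI[of _ C'] conjI allI impI C'0)
    fix e d1 d2 x y :: real assume e: "\<bar>e\<bar> \<le> 1"
    define P where "P = (Tmap \<mu> f e d1 ^^ k) (x,y)"
    define Q where "Q = (Tmap \<mu> f e d2 ^^ k) (x,y)"
    define a1 where "a1 = fst P"
    define b1 where "b1 = snd P"
    define a2 where "a2 = fst Q"
    define b2 where "b2 = snd Q"
    define d where "d = d1 - d2"
    define D where "D = \<bar>d\<bar>"
    define E where "E = \<bar>e\<bar>"
    have h: "\<bar>a1 - a2\<bar> \<le> C * D" "\<bar>b1 - b2 + real k * d\<bar> \<le> C * E * D"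
      "\<bar>a1 - a2 + real k * (real k + 1) / 2 * d\<bar> \<le> C * E * D"
      using IH[OF e, of d1 x y d2] unfolding a1_def a2_def b1_def b2_def P_def Q_def d_def D_def E_def
      by auto
    have P1: "(Tmap \<mu> f e d1 ^^ Suc k) (x,y) = (a1 + b1 + \<mu> - d1 - e * f a1, b1 - d1 - e * f a1)"
      by (simp add: Tmap_eq a1_def b1_def P_def)
    have Q1: "(Tmap \<mu> f e d2 ^^ Suc k) (x,y) = (a2 + b2 + \<mu> - d2 - e * f a2, b2 - d2 - e * f a2)"
      by (simp add: Tmap_eq a2_def b2_def Q_def)
    have D0: "D \<ge> 0" "E \<ge> 0" "E \<le> 1" using e by (auto simp: D_def E_def)
    have F: "\<bar>e * (f a1 - f a2)\<bar> \<le> E * (L * (C * D))"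
    proof -
      have "\<bar>f a1 - f a2\<bar> \<le> L * (C * D)"
        using Lf h(1) L0 by (meson mult_left_mono order_trans)
      then show ?thesis unfolding E_def abs_mult by (intro mult_left_mono) auto
    qed
    have m1: "C * E * D \<le> C * D" proof -
      have "(C * D) * E \<le> (C * D) * 1" using D0 C0 by (intro mult_left_mono) auto
      then show ?thesis by (simp add: algebra_simps)
    qed
    have m2: "E * (L * (C * D)) \<le> L * C * D" proof -
      have "(L * (C * D)) * E \<le> (L * (C * D)) * 1" using D0 C0 L0 by (intro mult_left_mono) auto
      then show ?thesis by (simp add: algebra_simps)
    qed
    have kD: "0 \<le> (real k + 1) * D" using D0 by simp
    let ?dy = "(b1 - d1 - e * f a1) - (b2 - d2 - e * f a2)"
    have dy: "?dy + real (Suc k) * d = (b1 - b2 + real k * d) - e * (f a1 - f a2)"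
      by (simp add: d_def algebra_simps)
    have dx: "(a1 + b1 + \<mu> - d1 - e * f a1) - (a2 + b2 + \<mu> - d2 - e * f a2) = (a1 - a2) + ?dy"
      by simp
    have dx2: "(a1 - a2) + ?dy + real (Suc k) * (real (Suc k) + 1) / 2 * d
        = (a1 - a2 + real k * (real k + 1) / 2 * d) + (?dy + real (Suc k) * d)"
      by (simp add: field_simps)
    have A: "\<bar>?dy + real (Suc k) * d\<bar> \<le> C * E * D + E * (L * (C * D))"
      using dy h(2) F by (smt (verit))
    show "\<bar>fst ((Tmap \<mu> f e d1 ^^ Suc k) (x, y)) - fst ((Tmap \<mu> f e d2 ^^ Suc k) (x, y))\<bar> \<le> C' * \<bar>d1 - d2\<bar>"
    proof -
      have "\<bar>?dy\<bar> \<le> C * E * D + E * (L * (C * D)) + (real k + 1) * D"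
      proof -
        have "\<bar>real (Suc k) * d\<bar> = (real k + 1) * D" by (simp add: D_def abs_mult)
        then show ?thesis using A abs_triangle_ineq4[of "?dy + real (Suc k) * d" "real (Suc k) * d"]
          by simp
      qed
      then have "\<bar>(a1 - a2) + ?dy\<bar> \<le> C' * D"
        using h(1) m1 m2 unfolding C'_def by (simp add: algebra_simps)
      then show ?thesis using P1 Q1 dx by (simp add: D_def d_def)
    qed
    show "\<bar>snd ((Tmap \<mu> f e d1 ^^ Suc k) (x, y)) - snd ((Tmap \<mu> f e d2 ^^ Suc k) (x, y)) + real (Suc k) * (d1 - d2)\<bar>
        \<le> C' * \<bar>e\<bar> * \<bar>d1 - d2\<bar>"
    proof -
      have "C * E * D + E * (L * (C * D)) \<le> C' * E * D"
        unfolding C'_def using D0 C0 L0 kD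
        by (simp add: algebra_simps)
      then show ?thesis using A P1 Q1 by (simp add: D_def E_def d_def)
    qed
    show "\<bar>fst ((Tmap \<mu> f e d1 ^^ Suc k) (x, y)) - fst ((Tmap \<mu> f e d2 ^^ Suc k) (x, y))
         + real (Suc k) * (real (Suc k) + 1) / 2 * (d1 - d2)\<bar> \<le> C' * \<bar>e\<bar> * \<bar>d1 - d2\<bar>"
    proof -
      have "\<bar>(a1 - a2) + ?dy + real (Suc k) * (real (Suc k) + 1) / 2 * d\<bar>
           \<le> C * E * D + (C * E * D + E * (L * (C * D)))"
        unfolding dx2 using h(3) A abs_triangle_ineq[of "a1 - a2 + real k * (real k + 1) / 2 * d" "?dy + real (Suc k) * d"]
        by linarith
      also have "\<dots> \<le> C' * E * D"
        unfolding C'_def using D0 C0 L0 kD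
        by (simp add: algebra_simps)
      finally show ?thesis using P1 Q1 by (simp add: D_def E_def d_def)
    qed
  qed
qed



lemma tail_bound:
  fixes c :: "nat \<Rightarrow> real" and F :: "real \<Rightarrow> real"
  assumes rho: "\<rho> > 0" and ser: "\<forall>e. \<bar>e\<bar> < \<rho> \<longrightarrow> (\<lambda>n. c n * e ^ n) sums F e"
  shows "\<exists>K. eventually (\<lambda>e. \<bar>F e - (\<Sum>n<r. c n * e ^ n) - c r * e ^ r\<bar> \<le> K * \<bar>e\<bar> ^ Suc r) (at 0)"
proof -
  define S where "S = (\<lambda>e::real. \<Sum>n<Suc r. c n * e ^ n)"
  have sh: "(\<lambda>i. c (i + Suc r) * e ^ i) sums ((F e - S e) / e ^ Suc r)"
    if e: "\<bar>e\<bar> < \<rho>" "e \<noteq> 0" for e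
  proof -
    have "(\<lambda>i. c (i + Suc r) * e ^ (i + Suc r)) sums (F e - S e)"
      unfolding S_def using sums_split_initial_segment[OF ser[rule_format, OF e(1)], of "Suc r"] by simp
    from sums_mult[OF this, of "1 / e ^ Suc r"]
    have "(\<lambda>i. 1 / e ^ Suc r * (c (i + Suc r) * e ^ (i + Suc r))) sums (1 / e ^ Suc r * (F e - S e))" .
    moreover have "(\<lambda>i. 1 / e ^ Suc r * (c (i + Suc r) * e ^ (i + Suc r))) = (\<lambda>i. c (i + Suc r) * e ^ i)"
      using e(2) by (auto simp: power_add field_simps)
    ultimately show ?thesis by simp
  qed
  define T where "T = (\<lambda>e::real. \<Sum>i. c (i + Suc r) * e ^ i)"
  have Teq: "F e - S e = e ^ Suc r * T e" if e: "\<bar>e\<bar> < \<rho>" "e \<noteq> 0" for e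
    using sums_unique[OF sh[OF e]] e(2) unfolding T_def by (simp add: field_simps)
  have sm: "summable (\<lambda>i. c (i + Suc r) * (\<rho>/2) ^ i)"
    using sh[of "\<rho>/2"] rho by (auto intro: sums_summable)
  have "isCont T 0" unfolding T_def by (rule isCont_powser[OF sm]) (use rho in auto)
  then have "(T \<longlongrightarrow> T 0) (at 0)" by (simp add: isCont_def)
  then have ev1: "eventually (\<lambda>e. dist (T e) (T 0) < 1) (at 0)" by (rule tendstoD) simp
  have ev2: "eventually (\<lambda>e::real. \<bar>e\<bar> < \<rho>) (at 0)"
    using rho by (intro eventually_at_in_open'[of "{-\<rho><..<\<rho>}" 0, THEN eventually_mono]) auto
  have ev3: "eventually (\<lambda>e::real. e \<noteq> 0) (at 0)" by (simp add: eventually_at_filter)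
  have "eventually (\<lambda>e. \<bar>F e - (\<Sum>n<r. c n * e ^ n) - c r * e ^ r\<bar> \<le> (\<bar>T 0\<bar> + 1) * \<bar>e\<bar> ^ Suc r) (at 0)"
    using ev1 ev2 ev3
  proof eventually_elim
    case (elim e)
    have "F e - (\<Sum>n<r. c n * e ^ n) - c r * e ^ r = F e - S e" by (simp add: S_def)
    also have "\<dots> = e ^ Suc r * T e" using Teq elim by blast
    finally have "\<bar>F e - (\<Sum>n<r. c n * e ^ n) - c r * e ^ r\<bar> = \<bar>e\<bar> ^ Suc r * \<bar>T e\<bar>"
      by (simp add: abs_mult power_abs)
    also have "\<dots> \<le> \<bar>e\<bar> ^ Suc r * (\<bar>T 0\<bar> + 1)"
      using elim(1) by (intro mult_left_mono) (auto simp: dist_real_def)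
    finally show ?case by (simp add: mult.commute)
  qed
  then show ?thesis by blast
qed


theorem mainTheorem7:
  fixes p :: int and q :: nat and \<mu> :: real and f :: "real \<Rightarrow> real"
    and eb \<eta> :: real and \<Delta> Y :: "real \<Rightarrow> real \<Rightarrow> real"
    and Dn :: "nat \<Rightarrow> real \<Rightarrow> real" and r :: nat
  assumes q_pos: "q \<ge> 1"
    and mu_def: "\<mu> = 2 * pi * real_of_int p / real q"
    and f_periodic: "\<forall>x. f (x + 2 * pi) = f x"
    and f_analytic: "real_analytic_on f UNIV"
    and eb_pos: "eb > 0" and eta_pos: "\<eta> > 0"
    and Delta_analytic: "real_analytic2_on \<Delta> (UNIV \<times> {-eb<..<eb})"
    and Y_analytic: "real_analytic2_on Y (UNIV \<times> {-eb<..<eb})"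
    and Delta_zero: "\<forall>x. \<Delta> x 0 = 0"
    and Y_zero: "\<forall>x. Y x 0 = 0"
    and solution: "\<forall>x \<epsilon>. \<bar>\<epsilon>\<bar> < eb \<longrightarrow>
        \<bar>\<Delta> x \<epsilon>\<bar> < \<eta> \<and> \<bar>Y x \<epsilon>\<bar> < \<eta> \<and>
        nR q \<mu> f x (Y x \<epsilon>) \<epsilon> (\<Delta> x \<epsilon>) = 0 \<and> nS q \<mu> f x (Y x \<epsilon>) \<epsilon> (\<Delta> x \<epsilon>) = 0"
    and unique: "\<forall>x \<epsilon> \<delta> y. \<bar>\<epsilon>\<bar> < eb \<and> \<bar>\<delta>\<bar> < \<eta> \<and> \<bar>y\<bar> < \<eta> \<and>
        nR q \<mu> f x y \<epsilon> \<delta> = 0 \<and> nS q \<mu> f x y \<epsilon> \<delta> = 0 \<longrightarrow>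
        \<delta> = \<Delta> x \<epsilon> \<and> y = Y x \<epsilon>"
    and Delta_series: "\<forall>x. \<exists>\<rho>>0. \<forall>\<epsilon>. \<bar>\<epsilon>\<bar> < \<rho> \<longrightarrow> (\<lambda>n. Dn n x * \<epsilon> ^ n) sums \<Delta> x \<epsilon>"
    and Delta_depends: "\<exists>x1 x2 \<epsilon>. \<bar>\<epsilon>\<bar> < eb \<and> \<Delta> x1 \<epsilon> \<noteq> \<Delta> x2 \<epsilon>"
    and r_pos: "r \<ge> 1"
    and r_nonconst: "\<exists>x1 x2. Dn r x1 \<noteq> Dn r x2"
    and below_r_const: "\<forall>n<r. \<forall>x1 x2. Dn n x1 = Dn n x2"
  defines "A \<equiv> (\<lambda>\<epsilon>. \<Sum>n<r. Dn n 0 * \<epsilon> ^ n)"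
  shows "\<forall>x.
     (\<lambda>\<epsilon>. nR q \<mu> f x (Y x \<epsilon>) \<epsilon> (A \<epsilon>) - real (q * (q + 1)) / 2 * Dn r x * \<epsilon> ^ r)
        \<in> o[at 0](\<lambda>\<epsilon>. \<epsilon> ^ r) \<and>
     (\<lambda>\<epsilon>. nS q \<mu> f x (Y x \<epsilon>) \<epsilon> (A \<epsilon>) - real q * Dn r x * \<epsilon> ^ r)
        \<in> o[at 0](\<lambda>\<epsilon>. \<epsilon> ^ r)"
  proof (intro allI)
  fix x :: real
  have dvs: "\<forall>x. (f has_field_derivative deriv f x) (at x)" "continuous_on UNIV (deriv f)"
    using analytic_deriv[OF f_analytic] by auto
  obtain L where L0: "L \<ge> 0" and Lf: "\<forall>u v. \<bar>f u - f v\<bar> \<le> L * \<bar>u - v\<bar>"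
    using periodic_lipschitz[OF f_periodic dvs] by blast
  obtain C where C0: "C \<ge> 0" and Cb: "\<forall>e d1 d2 x y. \<bar>e\<bar> \<le> 1 \<longrightarrow>
      \<bar>fst ((Tmap \<mu> f e d1 ^^ q) (x,y)) - fst ((Tmap \<mu> f e d2 ^^ q) (x,y))\<bar> \<le> C * \<bar>d1 - d2\<bar> \<and>
      \<bar>snd ((Tmap \<mu> f e d1 ^^ q) (x,y)) - snd ((Tmap \<mu> f e d2 ^^ q) (x,y)) + real q * (d1 - d2)\<bar>
         \<le> C * \<bar>e\<bar> * \<bar>d1 - d2\<bar> \<and>
      \<bar>fst ((Tmap \<mu> f e d1 ^^ q) (x,y)) - fst ((Tmap \<mu> f e d2 ^^ q) (x,y))
         + real q * (real q + 1) / 2 * (d1 - d2)\<bar> \<le> C * \<bar>e\<bar> * \<bar>d1 - d2\<bar>"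
    using orbit_diff[OF L0 Lf, where \<mu>=\<mu> and k=q] by blast
  obtain \<rho> where rho: "\<rho> > 0" and ser: "\<forall>e. \<bar>e\<bar> < \<rho> \<longrightarrow> (\<lambda>n. Dn n x * e ^ n) sums \<Delta> x e"
    using Delta_series by blast
  obtain K1 where evK1: "eventually (\<lambda>e. \<bar>\<Delta> x e - (\<Sum>n<r. Dn n x * e ^ n) - Dn r x * e ^ r\<bar> \<le> K1 * \<bar>e\<bar> ^ Suc r) (at 0)"
    using tail_bound[OF rho ser, of r] by blast
  define K where "K = \<bar>K1\<bar>"
  have K0: "0 \<le> K" by (simp add: K_def)
  have evK: "eventually (\<lambda>e. \<bar>\<Delta> x e - (\<Sum>n<r. Dn n x * e ^ n) - Dn r x * e ^ r\<bar> \<le> K * \<bar>e\<bar> ^ Suc r) (at 0)"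
    using evK1
  proof eventually_elim
    case (elim e)
    have "K1 * \<bar>e\<bar> ^ Suc r \<le> K * \<bar>e\<bar> ^ Suc r" unfolding K_def by (intro mult_right_mono) auto
    with elim show ?case by linarith
  qed
  have Aeq: "(\<Sum>n<r. Dn n x * e ^ n) = A e" for e
    unfolding A_def using below_r_const by (intro sum.cong) auto
  define Dr where "Dr = Dn r x"
  define B where "B = C * (\<bar>Dr\<bar> + \<bar>K\<bar>) + real q * (real q + 1) * \<bar>K\<bar>"
  have ev2: "eventually (\<lambda>e::real. \<bar>e\<bar> < min eb 1) (at 0)"
    using eb_pos by (intro eventually_at_in_open'[of "{-min eb 1<..<min eb 1}" 0, THEN eventually_mono]) auto
  have main: "eventually (\<lambda>e.
      \<bar>nR q \<mu> f x (Y x e) e (A e) - real (q * (q + 1)) / 2 * Dn r x * e ^ r\<bar> \<le> B * \<bar>e\<bar> ^ Suc r \<and>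
      \<bar>nS q \<mu> f x (Y x e) e (A e) - real q * Dn r x * e ^ r\<bar> \<le> B * \<bar>e\<bar> ^ Suc r) (at 0)"
    using evK ev2
  proof eventually_elim
    case (elim e)
    define d where "d = \<Delta> x e - A e"
    define tt where "tt = d - Dr * e ^ r"
    define P where "P = (Tmap \<mu> f e (\<Delta> x e) ^^ q) (x, Y x e)"
    define Q where "Q = (Tmap \<mu> f e (A e) ^^ q) (x, Y x e)"
    define E where "E = \<bar>e\<bar>"
    have E: "0 \<le> E" "E \<le> 1" "E < eb" using elim(2) by (auto simp: E_def)
    have tt: "\<bar>tt\<bar> \<le> K * E ^ Suc r" using elim(1) Aeq unfolding tt_def d_def Dr_def E_def by simp
    have sol: "nR q \<mu> f x (Y x e) e (\<Delta> x e) = 0" "nS q \<mu> f x (Y x e) e (\<Delta> x e) = 0"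
      using solution E by (auto simp: E_def)
    have cb: "\<bar>snd P - snd Q + real q * d\<bar> \<le> C * E * \<bar>d\<bar>"
      "\<bar>fst P - fst Q + real q * (real q + 1) / 2 * d\<bar> \<le> C * E * \<bar>d\<bar>"
      using Cb[rule_format, of e "\<Delta> x e" x "Y x e" "A e"] E unfolding P_def Q_def d_def E_def by auto
    have Er: "E ^ Suc r \<le> E ^ r" using E by (simp add: mult_left_le_one_le)
    have dbound: "\<bar>d\<bar> \<le> (\<bar>Dr\<bar> + K) * E ^ r"
    proof -
      have a: "\<bar>d\<bar> \<le> \<bar>Dr * e ^ r\<bar> + \<bar>tt\<bar>" unfolding tt_def by linarith
      have b: "\<bar>Dr * e ^ r\<bar> = \<bar>Dr\<bar> * E ^ r" by (simp add: E_def abs_mult power_abs)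
      have c: "K * E ^ Suc r \<le> K * E ^ r" using K0 Er by (intro mult_left_mono) auto
      show ?thesis using a b c tt by (simp add: algebra_simps)
    qed
    have Ed: "C * E * \<bar>d\<bar> \<le> C * (\<bar>Dr\<bar> + \<bar>K\<bar>) * E ^ Suc r"
    proof -
      have "E * \<bar>d\<bar> \<le> E * ((\<bar>Dr\<bar> + K) * E ^ r)" by (rule mult_left_mono[OF dbound E(1)])
      then have "C * (E * \<bar>d\<bar>) \<le> C * (E * ((\<bar>Dr\<bar> + K) * E ^ r))" by (rule mult_left_mono[OF _ C0])
      then show ?thesis using K0 by (simp add: algebra_simps)
    qed
    have qK: "real q * \<bar>tt\<bar> \<le> real q * (real q + 1) * \<bar>K\<bar> * E ^ Suc r"
    proof -
      have "real q * \<bar>tt\<bar> \<le> real q * (K * E ^ Suc r)" by (rule mult_left_mono[OF tt]) simp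
      also have "\<dots> \<le> real q * (real q + 1) * \<bar>K\<bar> * E ^ Suc r"
        using K0 E by (simp add: algebra_simps mult_right_mono zero_le_power)
      finally show ?thesis .
    qed
    have qK2: "real q * (real q + 1) / 2 * \<bar>tt\<bar> \<le> real q * (real q + 1) * \<bar>K\<bar> * E ^ Suc r"
    proof -
      have "real q * (real q + 1) / 2 * \<bar>tt\<bar> \<le> real q * (real q + 1) / 2 * (K * E ^ Suc r)"
        by (rule mult_left_mono[OF tt]) simp
      also have "\<dots> \<le> real q * (real q + 1) * \<bar>K\<bar> * E ^ Suc r"
        using K0 E by (simp add: algebra_simps mult_right_mono zero_le_power)
      finally show ?thesis .
    qed
    have nSA: "nS q \<mu> f x (Y x e) e (A e) = snd Q - snd P"
      using sol(2) unfolding nS_def P_def Q_def by simp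
    have nRA: "nR q \<mu> f x (Y x e) e (A e) = fst Q - fst P"
      using sol(1) unfolding nR_def P_def Q_def by simp
    have e1: "snd Q - snd P - real q * Dn r x * e ^ r = real q * tt - (snd P - snd Q + real q * d)"
      unfolding tt_def Dr_def by (simp add: algebra_simps)
    have e2: "fst Q - fst P - real (q * (q + 1)) / 2 * Dn r x * e ^ r
        = real q * (real q + 1) / 2 * tt - (fst P - fst Q + real q * (real q + 1) / 2 * d)"
      unfolding tt_def Dr_def by (simp add: field_simps)
    have at1: "\<bar>real q * tt\<bar> = real q * \<bar>tt\<bar>" by (simp add: abs_mult)
    have at2: "\<bar>real q * (real q + 1) / 2 * tt\<bar> = real q * (real q + 1) / 2 * \<bar>tt\<bar>" by (simp add: abs_mult)
    have Bs: "B * E ^ Suc r = C * (\<bar>Dr\<bar> + \<bar>K\<bar>) * E ^ Suc r + real q * (real q + 1) * \<bar>K\<bar> * E ^ Suc r"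
      by (simp add: B_def algebra_simps)
    have t1: "\<bar>real q * tt - (snd P - snd Q + real q * d)\<bar> \<le> B * E ^ Suc r"
      using cb(1) Ed qK at1 Bs abs_triangle_ineq4[of "real q * tt" "snd P - snd Q + real q * d"] by linarith
    have t2: "\<bar>real q * (real q + 1) / 2 * tt - (fst P - fst Q + real q * (real q + 1) / 2 * d)\<bar> \<le> B * E ^ Suc r"
      using cb(2) Ed qK2 at2 Bs abs_triangle_ineq4[of "real q * (real q + 1) / 2 * tt" "fst P - fst Q + real q * (real q + 1) / 2 * d"]
      by linarith
    show ?case unfolding nSA nRA e1 e2 using t1 t2 unfolding E_def by blast
  qed
  show "(\<lambda>e. nR q \<mu> f x (Y x e) e (A e) - real (q * (q + 1)) / 2 * Dn r x * e ^ r) \<in> o[at 0](\<lambda>e. e ^ r) \<and>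
     (\<lambda>e. nS q \<mu> f x (Y x e) e (A e) - real q * Dn r x * e ^ r) \<in> o[at 0](\<lambda>e. e ^ r)"
    by (intro conjI o_lemma[where K = B]) (use main in \<open>eventually_elim, blast\<close>)+
qed

end
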